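(* Let $a,b,g,m,n>0$ and $0<e<1$, and consider the planar system $$\dot x=a-ex-\frac{xy}{1+gy},\qquad \dot y=\frac{xy}{1+gy}-y-\frac{my}{b+ny}.$$ Let $a_1=(eg+1)n$, $a_2=(b+m)(eg+1)+n(e-a)$, $a_3=e(b+m)-ab$, $\Delta=a_2^2-4a_1a_3$, and $$a_4=\frac{[en-(b-m)(eg+1)]+\sqrt{4m(eg+1)[ne-b(eg+1)]}}{n}.$$ Suppose $n>\frac{(eg+1)b^2+m(eg+1)b}{me}$ and $a_4<a<\frac{e(m+b)}{b}$. Let $y_2=\frac{-a_2-\sqrt{\Delta}}{2a_1}$ and $x_2=\frac{a(1+gy_2)}{e+(eg+1)y_2}$, so that $E_2=(x_2,y_2)$ is an endemic equilibrium of the system. Then $E_2$ is a saddle point.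
   Context: The system is a rescaled SIR epidemic model with saturated infection rate and saturated treatment rate. *)

theory Defs
  imports "HOL-Analysis.Analysis"
begin

definition sir_field :: "real \<Rightarrow> real \<Rightarrow> real \<Rightarrow> real \<Rightarrow> real \<Rightarrow> real
    \<Rightarrow> real \<times> real \<Rightarrow> real \<times> real" where
  "sir_field a b e g m n = (\<lambda>(x, y).
      (a - e * x - x * y / (1 + g * y),
       x * y / (1 + g * y) - y - m * y / (b + n * y)))"

definition saddle_point :: "(real \<times> real \<Rightarrow> real \<times> real) \<Rightarrow> real \<times> real \<Rightarrow> bool" where
  "saddle_point F p \<longleftrightarrow> F p = 0 \<and>
     (\<exists>L. (F has_derivative L) (at p) \<and>
        (\<exists>l1 l2 v1 v2. l1 < 0 \<and> 0 < l2 \<and> v1 \<noteq> 0 \<and> v2 \<noteq> 0 \<and>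
            L v1 = l1 *\<^sub>R v1 \<and> L v2 = l2 *\<^sub>R v2))"

end

theory Submission
  imports Defs
begin
lemma dq:
  fixes x y g :: real
  assumes s: "1 + g*y \<noteq> 0"
  shows "((\<lambda>z. fst z * snd z / (1 + g* snd z)) has_derivative (\<lambda>h. (y/(1+g*y)) * fst h + (x/(1+g*y)^2) * snd h)) (at (x,y))"
proof -
  have e: "1 + g* snd (x,y) \<noteq> 0" using s by simp
  have "1 + (g*(g*(y*y)) + g*(y*2)) = (1+g*y)*(1+g*y)" by (simp add: algebra_simps)
  hence s3: "1 + (g*(g*(y*y)) + g*(y*2)) \<noteq> 0" using s by simp
  show ?thesis
    apply (rule derivative_eq_intros refl e)+
    apply (rule ext)
    apply (simp add: field_simps power2_eq_square s s3)
    done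
qed
lemma dr:
  fixes b n m y :: real
  assumes s: "b + n*y \<noteq> 0"
  shows "((\<lambda>z. m * snd z / (b + n* snd z)) has_derivative (\<lambda>h. (m*b/(b+n*y)^2) * snd h)) (at (x,y))"
proof -
  have e: "b + n* snd (x,y) \<noteq> 0" using s by simp
  have "b*b + (n*(n*(y*y)) + b*(n*(y*2))) = (b+n*y)*(b+n*y)" by (simp add: algebra_simps)
  hence s3: "b*b + (n*(n*(y*y)) + b*(n*(y*2))) \<noteq> 0" using s by simp
  show ?thesis
    apply (rule derivative_eq_intros refl e)+
    apply (rule ext)
    apply (simp add: divide_simps s)
    apply (simp add: algebra_simps power2_eq_square)
    done
qed
lemma deriv_field:
  fixes a b e g m n x y :: real
  assumes s1: "1 + g*y \<noteq> 0" and s2: "b + n*y \<noteq> 0"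
  shows "(sir_field a b e g m n has_derivative (\<lambda>h. ((-e - y/(1+g*y)) * fst h - x/(1+g*y)^2 * snd h,
     y/(1+g*y) * fst h + (x/(1+g*y)^2 - 1 - m*b/(b+n*y)^2) * snd h))) (at (x,y))"
proof -
  have eq: "sir_field a b e g m n = (\<lambda>z. (a - e * fst z - fst z * snd z / (1 + g * snd z),
       fst z * snd z / (1 + g * snd z) - snd z - m * snd z / (b + n * snd z)))"
    by (auto simp: sir_field_def fun_eq_iff)
  have lf: "((\<lambda>z::real\<times>real. e * fst z) has_derivative (\<lambda>h. e * fst h)) (at (x,y))"
    by (auto intro!: derivative_eq_intros)
  have ls: "((\<lambda>z::real\<times>real. snd z) has_derivative (\<lambda>h. snd h)) (at (x,y))"
    by (auto intro!: derivative_eq_intros)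
  have d1: "((\<lambda>z. a - e * fst z - fst z * snd z / (1 + g * snd z)) has_derivative
     (\<lambda>h. (-e - y/(1+g*y)) * fst h - x/(1+g*y)^2 * snd h)) (at (x,y))"
    using has_derivative_diff[OF has_derivative_diff[OF has_derivative_const[of a] lf] dq[OF s1]]
    by (simp add: algebra_simps)
  have d2: "((\<lambda>z. fst z * snd z / (1 + g * snd z) - snd z - m * snd z / (b + n * snd z)) has_derivative
     (\<lambda>h. y/(1+g*y) * fst h + (x/(1+g*y)^2 - 1 - m*b/(b+n*y)^2) * snd h)) (at (x,y))"
    using has_derivative_diff[OF has_derivative_diff[OF dq[OF s1] ls] dr[OF s2, of m x]]
    by (simp add: algebra_simps)
  show ?thesis unfolding eq by (rule has_derivative_Pair[OF d1 d2])
qed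
lemma detid:
  fixes e g y b n m x q w :: real
  assumes q: "q = 1 + g*y" and w: "w = b + n*y" and q0: "q \<noteq> 0" and w0: "w \<noteq> 0"
    and x: "x = q*(w+m)/w"
  shows "(-e - y/q)*(x/q^2 - 1 - m*b/w^2) - (-(x/q^2))*(y/q) = y*((e*g+1)*w^2 + (e*g+1)*m*b - e*m*n)/(q*w^2)"
proof -
  have "(-e - y/q)*(x/q^2 - 1 - m*b/w^2) - (-(x/q^2))*(y/q)
      = (-(e*q + y))*((w+m)*w - q*w^2 - m*b*q)/(q^2*w^2) + (w+m)*y/(q^2*w)"
    unfolding x using q0 w0 by (simp add: field_simps power2_eq_square)
  also have "\<dots> = (-(e*q + y)*((w+m)*w - q*w^2 - m*b*q) + (w+m)*y*w)/(q^2*w^2)"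
    using q0 w0 by (simp add: field_simps power2_eq_square)
  also have "\<dots> = (q*y*((e*g+1)*w^2 + (e*g+1)*m*b - e*m*n))/(q^2*w^2)"
    unfolding q w by (simp add: algebra_simps power2_eq_square)
  also have "\<dots> = y*((e*g+1)*w^2 + (e*g+1)*m*b - e*m*n)/(q*w^2)"
    using q0 by (simp add: power2_eq_square)
  finally show ?thesis .
qed
lemma eig_root:
  fixes A B C D l :: real
  assumes "l^2 - (A+D)*l + (A*D - B*C) = 0"
  shows "(A * fst (l - D, C) + B * snd (l - D, C), C * fst (l - D, C) + D * snd (l - D, C)) = l *\<^sub>R (l - D, C)"
  using assms by (simp add: algebra_simps power2_eq_square)

lemma saddle_2x2:
  fixes A B C D :: real and L :: "real \<times> real \<Rightarrow> real \<times> real"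
  assumes "C \<noteq> 0" "A*D - B*C < 0" "\<And>h. L h = (A * fst h + B * snd h, C * fst h + D * snd h)"
  shows "\<exists>l1 l2 v1 v2. l1 < 0 \<and> 0 < l2 \<and> v1 \<noteq> 0 \<and> v2 \<noteq> 0 \<and> L v1 = l1 *\<^sub>R v1 \<and> L v2 = l2 *\<^sub>R v2"
proof -
  define T where "T = A + D"
  define R where "R = sqrt (T^2 - 4*(A*D-B*C))"
  have nn: "0 \<le> T^2 - 4*(A*D-B*C)" using assms(2) zero_le_power2[of T] by (smt (verit))
  have R2: "R^2 = T^2 - 4*(A*D-B*C)" unfolding R_def by (rule real_sqrt_pow2[OF nn])
  have R0: "R \<ge> 0" unfolding R_def by (rule real_sqrt_ge_zero[OF nn])
  have "T^2 < R^2" using R2 assms(2) by (smt (verit))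
  hence RT: "\<bar>T\<bar> < R" using R0 power2_less_imp_less[of "\<bar>T\<bar>" R] by simp
  define l1 where "l1 = (T - R)/2"
  define l2 where "l2 = (T + R)/2"
  have q1: "l1^2 - (A+D)*l1 + (A*D - B*C) = 0" unfolding l1_def T_def[symmetric]
    using R2 by (simp add: field_simps power2_eq_square; smt (verit))
  have q2: "l2^2 - (A+D)*l2 + (A*D - B*C) = 0" unfolding l2_def T_def[symmetric]
    using R2 by (simp add: field_simps power2_eq_square; smt (verit))
  have "l1 < 0" "0 < l2" using RT unfolding l1_def l2_def by auto
  moreover have "(l1 - D, C) \<noteq> 0" "(l2 - D, C) \<noteq> 0" using assms(1) by (auto simp: zero_prod_def)
  moreover have "L (l1 - D, C) = l1 *\<^sub>R (l1 - D, C)" "L (l2 - D, C) = l2 *\<^sub>R (l2 - D, C)"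
    using eig_root[OF q1] eig_root[OF q2] assms(3) by metis+
  ultimately show ?thesis by blast
qed

theorem theorem2p3:
  fixes a b e g m n :: real
  assumes "a > 0" "b > 0" "g > 0" "m > 0" "n > 0" "0 < e" "e < 1"
    and "n > ((e * g + 1) * b\<^sup>2 + m * (e * g + 1) * b) / (m * e)"
    and "(e * n - (b - m) * (e * g + 1) + sqrt (4 * m * (e * g + 1) * (n * e - b * (e * g + 1)))) / n < a"
    and "a < e * (m + b) / b"
  defines "a1 \<equiv> (e * g + 1) * n"
    and "a2 \<equiv> (b + m) * (e * g + 1) + n * (e - a)"
    and "a3 \<equiv> e * (b + m) - a * b"
  defines "\<Delta> \<equiv> a2\<^sup>2 - 4 * a1 * a3"
  defines "y2 \<equiv> (- a2 - sqrt \<Delta>) / (2 * a1)"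
  defines "x2 \<equiv> a * (1 + g * y2) / (e + (e * g + 1) * y2)"
  shows "saddle_point (sir_field a b e g m n) (x2, y2)"
proof -
  define K where "K = e*g + 1"
  have K0: "K > 1" unfolding K_def using assms by simp
  have hn: "n * (m * e) > K * b^2 + m * K * b" using assms(8) assms by (simp add: K_def field_simps)
  have pos: "n*e - b*K > 0"
  proof -
    have "m * (n*e - b*K) > K*b^2" using hn by (simp add: algebra_simps)
    moreover have "K*b^2 > 0" using K0 assms by simp
    ultimately show ?thesis using assms(4) zero_less_mult_pos[of m "n*e - b*K"] by linarith
  qed
  define S where "S = sqrt (4*m*K*(n*e - b*K))"
  have Snn: "0 \<le> 4*m*K*(n*e - b*K)" using pos K0 assms(4) by simp
  hence S2: "S^2 = 4*m*K*(n*e - b*K)" unfolding S_def by (rule real_sqrt_pow2)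
  have S0: "S \<ge> 0" unfolding S_def by (rule real_sqrt_ge_zero[OF Snn])
  have "S^2 \<ge> (2*K*b)^2" unfolding S2 using mult_strict_left_mono[OF hn, of "4*K"] K0 by (simp add: algebra_simps power2_eq_square)
  hence SK: "S \<ge> 2*K*b" using S0 by (rule power2_le_imp_le)
  have ha: "n*a > e*n - (b-m)*K + S" using assms(9) assms(5) unfolding S_def K_def by (simp add: field_simps)
  have a2n: "a2 < 0" unfolding a2_def K_def[symmetric] using ha SK by (simp add: algebra_simps)
  have a3p: "a3 > 0" unfolding a3_def using assms(10) assms(2) by (simp add: field_simps)
  have a1p: "a1 > 0" unfolding a1_def K_def[symmetric] using K0 assms(5) by simp
  have Dform: "\<Delta> = (n*a - (e*n - (b-m)*K))^2 - S^2"
    unfolding \<Delta>_def S2 a1_def a2_def a3_def K_def by (simp add: algebra_simps power2_eq_square)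
  have "(n*a - (e*n - (b-m)*K))^2 > S^2" using ha S0 power_strict_mono[of S "n*a - (e*n - (b-m)*K)" 2] by simp
  hence Dp: "\<Delta> > 0" using Dform by simp
  define r where "r = sqrt \<Delta>"
  have r2: "r^2 = \<Delta>" unfolding r_def using Dp by (simp only: real_sqrt_pow2 less_imp_le)
  have r0: "r > 0" unfolding r_def using Dp by (rule real_sqrt_gt_zero)
  have "\<Delta> < a2^2" unfolding \<Delta>_def using a1p a3p by simp
  hence "r^2 < (-a2)^2" using r2 by simp
  hence ra2: "r < -a2" using a2n power2_less_imp_less[of r "-a2"] by simp
  have y2r: "y2 = (-a2 - r)/(2*a1)" unfolding y2_def r_def by simp
  have y2p: "y2 > 0" unfolding y2r using ra2 a1p by simp
  have lin: "2*a1*y2 + a2 = -r" unfolding y2r using a1p by (simp add: field_simps)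
  have root: "a1*y2^2 + a2*y2 + a3 = 0"
  proof -
    have "4*a1*(a1*y2^2 + a2*y2 + a3) = (2*a1*y2 + a2)^2 - \<Delta>"
      unfolding \<Delta>_def by (simp add: algebra_simps power2_eq_square)
    also have "\<dots> = 0" unfolding lin using r2 by simp
    finally show ?thesis using a1p by simp
  qed
  have y2n: "y2 \<noteq> 0" using y2p by simp
  define q where "q = 1 + g*y2"
  define w where "w = b + n*y2"
  define E where "E = e + K*y2"
  have q0: "q > 0" unfolding q_def using assms(3) y2p by (simp add: add_pos_pos)
  have w0: "w > 0" unfolding w_def using assms(2,5) y2p by (simp add: add_pos_pos)
  have E0: "E > 0" unfolding E_def using assms(6) K0 y2p by (simp add: add_pos_pos)
  have "E*(w+m) - a*w = a1*y2^2 + a2*y2 + a3"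
    unfolding E_def w_def a1_def a2_def a3_def K_def by (simp add: algebra_simps power2_eq_square)
  hence aw: "a*w = E*(w+m)" using root by simp
  have xE: "x2 = a*q/E" unfolding x2_def q_def E_def K_def by simp
  have aE: "a = E*(w+m)/w" using aw w0 by (simp add: field_simps)
  have xw: "x2 = q*(w+m)/w" unfolding xE aE using E0 w0 by (simp add: field_simps)
  have "w*(2*a1*y2+a2) = w*(2*K*n*y2 + K*(b+m) + n*e) - n*(a*w)"
    unfolding a1_def a2_def K_def by (simp add: algebra_simps)
  also have "\<dots> = K*w^2 + K*m*b - e*m*n"
    unfolding aw unfolding E_def w_def by (simp add: algebra_simps power2_eq_square)
  finally have Dq: "K*w^2 + K*m*b - e*m*n = w*(-r)" using lin by simp
  have Dneg: "K*w^2 + K*m*b - e*m*n < 0" unfolding Dq using w0 r0 by (simp add: mult_pos_neg)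
  have det: "(-e - y2/q)*(x2/q^2 - 1 - m*b/w^2) - (-(x2/q^2))*(y2/q) < 0"
  proof -
    have "(-e - y2/q)*(x2/q^2 - 1 - m*b/w^2) - (-(x2/q^2))*(y2/q)
        = y2*((e*g+1)*w^2 + (e*g+1)*m*b - e*m*n)/(q*w^2)"
      by (rule detid[OF q_def w_def _ _ xw]) (use q0 w0 in auto)
    moreover have "y2*((e*g+1)*w^2 + (e*g+1)*m*b - e*m*n) < 0"
      using Dneg y2p unfolding K_def by (simp add: mult_pos_neg)
    moreover have "q*w^2 > 0" using q0 w0 by simp
    ultimately show ?thesis by (simp add: divide_neg_pos)
  qed
  have Eq: "E = e*q + y2" unfolding E_def q_def K_def by (simp add: algebra_simps)
  have eq1: "a - e*x2 - x2*y2/(1+g*y2) = 0"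
  proof -
    have "e*x2 + x2*y2/q = x2*E/q" unfolding Eq using q0 by (simp add: field_simps)
    also have "\<dots> = a" unfolding xE using q0 E0 by simp
    finally show ?thesis unfolding q_def by simp
  qed
  have eq2: "x2*y2/(1+g*y2) - y2 - m*y2/(b+n*y2) = 0"
    unfolding q_def[symmetric] w_def[symmetric] xw using q0 w0 by (simp add: field_simps)
  have F0: "sir_field a b e g m n (x2, y2) = 0"
    unfolding sir_field_def using eq1 eq2 by (simp add: zero_prod_def)
  have qn: "1 + g*y2 \<noteq> 0" "b + n*y2 \<noteq> 0" using q0 w0 unfolding q_def w_def by auto
  note D = deriv_field[OF qn, of a e m x2]
  have "\<exists>l1 l2 v1 v2. l1 < 0 \<and> 0 < l2 \<and> v1 \<noteq> 0 \<and> v2 \<noteq> 0 \<and>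
     (\<lambda>h. ((-e - y2/(1+g*y2)) * fst h - x2/(1+g*y2)^2 * snd h,
       y2/(1+g*y2) * fst h + (x2/(1+g*y2)^2 - 1 - m*b/(b+n*y2)^2) * snd h)) v1 = l1 *\<^sub>R v1 \<and>
     (\<lambda>h. ((-e - y2/(1+g*y2)) * fst h - x2/(1+g*y2)^2 * snd h,
       y2/(1+g*y2) * fst h + (x2/(1+g*y2)^2 - 1 - m*b/(b+n*y2)^2) * snd h)) v2 = l2 *\<^sub>R v2"
  proof (rule saddle_2x2[where A="-e - y2/(1+g*y2)" and B="- (x2/(1+g*y2)^2)" and C="y2/(1+g*y2)"
          and D="x2/(1+g*y2)^2 - 1 - m*b/(b+n*y2)^2"])
    show "y2/(1+g*y2) \<noteq> 0" using y2p qn by simp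
    show "(-e - y2/(1+g*y2)) * (x2/(1+g*y2)^2 - 1 - m*b/(b+n*y2)^2) - - (x2/(1+g*y2)^2) * (y2/(1+g*y2)) < 0"
      using det unfolding q_def w_def .
  qed simp
  thus ?thesis unfolding saddle_point_def using F0 D by blast
qed

end
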